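(* Let $\ell\geqslant 1$ be real. Assume $x\geqslant\exp\left(7^{28}(12e\ell)^{28\log(192e\ell)}\right)$ and $z\geqslant x^{\frac{1}{3\ell}}$. Then $$\#\{n\leqslant z:\ P^+(n)<\log x\,\log\log x\}<z^{1/4}.$$
   Context: $n$ ranges over positive integers; $P^+(n)$ denotes the largest prime factor of $n$ (with $P^+(1)=1$). *)

theory Defs
  imports "HOL-Analysis.Analysis" "HOL-Computational_Algebra.Primes"
begin

definition gpf :: "nat \<Rightarrow> nat" where
  "gpf n = (if n \<le> 1 then 1 else Max (prime_factors n))"

end

theory Submission
  imports Defs
begin

definition rk :: "nat \<Rightarrow> real" where "rk n = inverse (real n powr (1/8))"

lemma rk_mult: "rk (a*b) = rk a * rk b"
  unfolding rk_def by (simp add: powr_mult)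

lemma rk_pow: "rk (p^k) = rk p ^ k"
proof (cases "p = 0")
  case True thus ?thesis by (cases k) (simp_all add: rk_def)
next
  case False
  hence p0: "real p > 0" by simp
  have "real (p^k) powr (1/8) = (real p powr real k) powr (1/8)"
    using p0 by (simp add: powr_realpow)
  also have "\<dots> = real p powr (real k * (1/8))" by (simp add: powr_powr)
  also have "\<dots> = (real p powr (1/8)) ^ k" using p0 by (simp add: powr_power mult.commute)
  finally show ?thesis unfolding rk_def by (simp add: power_inverse)
qed

lemma rk_nonneg: "rk n \<ge> 0" unfolding rk_def by simp

lemma rk_prime: assumes "prime p" shows "rk p < 1"
proof -
  have "real p > 1" using prime_gt_1_nat[OF assms] by simp
  hence "real p powr (1/8) > 1 powr (1/8)" by (intro powr_less_mono2) auto
  thus ?thesis unfolding rk_def by (simp add: inverse_less_1_iff)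
qed

definition Asm :: "nat set \<Rightarrow> nat \<Rightarrow> nat set" where
  "Asm P N = {n. 1 \<le> n \<and> n \<le> N \<and> prime_factors n \<subseteq> P}"

lemma Asm_finite: "finite (Asm P N)"
  by (rule finite_subset[of _ "{..N}"]) (auto simp: Asm_def)

lemma smooth_sum:
  assumes "finite P" "\<forall>p\<in>P. prime p"
  shows "(\<Sum>n\<in>Asm P N. rk n) \<le> (\<Prod>p\<in>P. 1 / (1 - rk p))"
  using assms
proof (induction P rule: finite_induct)
  case empty
  have "Asm {} N \<subseteq> {1}"
  proof
    fix n assume "n \<in> Asm {} N"
    hence "n \<ge> 1" "prime_factors n = {}" by (auto simp: Asm_def)
    thus "n \<in> {1}" by (metis prime_factor_nat in_prime_factors_iff not_one_le_zero empty_iff singletonI)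
  qed
  hence "(\<Sum>n\<in>Asm {} N. rk n) \<le> (\<Sum>n\<in>{1}. rk n)"
    by (intro sum_mono2) (auto simp: rk_nonneg)
  then show ?case by (simp add: rk_def)
next
  case (insert p P)
  have pp: "prime p" using insert by auto
  have IH: "(\<Sum>n\<in>Asm P N. rk n) \<le> (\<Prod>p\<in>P. 1 / (1 - rk p))" using insert by auto
  define phi where "phi n = (multiplicity p n, n div p ^ multiplicity p n)" for n
  have dec: "n = p ^ multiplicity p n * (n div p ^ multiplicity p n)" for n
    by (simp add: multiplicity_dvd)
  have inj: "inj_on phi (Asm (insert p P) N)"
    by (intro inj_onI) (metis dec phi_def prod.inject)
  have sub0: "phi n \<in> {..N} \<times> Asm P N" if n: "n \<in> Asm (insert p P) N" for n
  proof -
    define k where "k = multiplicity p n"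
    define m where "m = n div p ^ k"
    have nm: "n = p^k * m" using dec[of n] by (simp add: k_def m_def)
    have n1: "n \<ge> 1" "n \<le> N" "prime_factors n \<subseteq> insert p P" using n by (auto simp: Asm_def)
    have "k < 2^k" by (rule less_exp)
    also have "2^k \<le> p^k" using prime_ge_2_nat[OF pp] by (intro power_mono) auto
    also have "p^k \<le> n" using nm n1 by (metis dvd_imp_le dvd_triv_left not_one_le_zero neq0_conv)
    finally have f1: "fst (phi n) \<in> {..N}" using n1 by (simp add: phi_def k_def)
    have m0: "m \<noteq> 0" using nm n1 by auto
    have "m \<le> n" using nm n1 by (metis dvd_imp_le dvd_triv_right not_one_le_zero neq0_conv)
    moreover have "\<not> p dvd m" unfolding m_def k_def
      by (rule multiplicity_decompose) (use n1 pp in \<open>auto simp: prime_gt_1_nat\<close>)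
    moreover have "prime_factors m \<subseteq> prime_factors n"
      using nm m0 n1 prime_gt_0_nat[OF pp] by (auto simp: in_prime_factors_iff)
    ultimately have "m \<in> Asm P N" using n1 m0
      by (auto simp: Asm_def in_prime_factors_iff)
    hence "snd (phi n) \<in> Asm P N" by (simp add: phi_def k_def m_def)
    thus ?thesis using f1 by (simp add: mem_Times_iff)
  qed
  have sub: "phi ` Asm (insert p P) N \<subseteq> {..N} \<times> Asm P N" using sub0 by blast
  have "(\<Sum>n\<in>Asm (insert p P) N. rk n) = (\<Sum>n\<in>Asm (insert p P) N. (\<lambda>(k,m). rk p ^ k * rk m) (phi n))"
    by (intro sum.cong refl) (metis dec phi_def rk_mult rk_pow case_prod_conv)
  also have "\<dots> = (\<Sum>q\<in>phi ` Asm (insert p P) N. (\<lambda>(k,m). rk p ^ k * rk m) q)"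
    using sum.reindex[OF inj, of "\<lambda>(k,m). rk p ^ k * rk m"] by (simp add: o_def)
  also have "\<dots> \<le> (\<Sum>q\<in>{..N} \<times> Asm P N. (\<lambda>(k,m). rk p ^ k * rk m) q)"
    by (intro sum_mono2 sub) (auto simp: Asm_finite rk_nonneg)
  also have "\<dots> = (\<Sum>k\<le>N. rk p ^ k) * (\<Sum>m\<in>Asm P N. rk m)"
    by (simp add: sum_product sum.cartesian_product)
  also have "\<dots> \<le> (1 / (1 - rk p)) * (\<Prod>p\<in>P. 1 / (1 - rk p))"
  proof (intro mult_mono IH)
    show "(\<Sum>k\<le>N. rk p ^ k) \<le> 1 / (1 - rk p)"
    proof (cases "rk p = 0")
      case True thus ?thesis by (simp add: power_0_left)
    next
      case False thus ?thesis using geometric_sum_less[of "rk p" "{..N}"] rk_prime[OF pp] rk_nonneg[of p] by simp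
    qed
    show "0 \<le> 1 / (1 - rk p)" using rk_prime[OF pp] by simp
    show "0 \<le> (\<Sum>m\<in>Asm P N. rk m)" by (intro sum_nonneg) (simp add: rk_nonneg)
  qed
  also have "\<dots> = (\<Prod>p\<in>insert p P. 1 / (1 - rk p))" using insert by simp
  finally show ?case .
qed



lemma e_bounds: "exp 1 \<ge> (2.7::real)" "exp 1 \<le> (3::real)"
  using e_approx_32 exp_le by (auto simp: abs_if split: if_splits)

lemma nat_le_floor: "real n \<le> z \<Longrightarrow> n \<le> nat \<lfloor>z\<rfloor>"
  by (metis floor_of_nat floor_mono nat_int nat_mono)

lemma card_le_real:
  fixes B :: real and A :: "nat set"
  assumes "B \<ge> 0" "\<And>n. n \<in> A \<Longrightarrow> 1 \<le> n \<and> real n \<le> B"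
  shows "finite A \<and> real (card A) \<le> B"
proof -
  have sub: "A \<subseteq> {1..nat \<lfloor>B\<rfloor>}" using assms(2) nat_le_floor by auto
  hence "card A \<le> nat \<lfloor>B\<rfloor>" using card_mono[OF _ sub] by simp
  hence "real (card A) \<le> real (nat \<lfloor>B\<rfloor>)" by simp
  also have "\<dots> \<le> B" using assms(1) by simp
  finally show ?thesis using finite_subset[OF sub] by simp
qed

lemma exp4: "exp (4::real) \<ge> 32"
proof -
  have "exp (4::real) = exp 1 ^ 4" by (simp flip: exp_of_nat_mult)
  also have "\<dots> \<ge> 2.7^4" using e_bounds by (intro power_mono) auto
  moreover have "(32::real) \<le> 2.7^4" by (simp add: power_divide)
  ultimately show ?thesis by linarith
qed

lemma inv_le_exp:
  fixes u :: real assumes "0 \<le> u" "u \<le> 1/2" shows "1 / (1 - u) \<le> exp (2 * u)"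
proof -
  have "1 + 2*u \<le> exp (2*u)" by (rule exp_ge_add_one_self)
  hence "(1 + 2*u) * (1 - u) \<le> exp (2*u) * (1 - u)" using assms by (intro mult_right_mono) auto
  moreover have "1 \<le> (1 + 2*u) * (1 - u)" using mult_nonneg_nonneg[of u "1-2*u"] assms by (simp add: algebra_simps)
  ultimately show ?thesis using assms by (simp add: field_simps)
qed

lemma pow8_root: fixes x :: real assumes "x \<ge> 0" shows "(x^8) powr (1/8) = x"
proof -
  have "x^8 = x powr 8" using assms by (simp add: powr_numeral)
  hence "(x^8) powr (1/8) = x powr (8 * (1/8))" by (simp add: powr_powr)
  also have "\<dots> = x" using assms by simp
  finally show ?thesis .
qed


lemma rk_small: assumes "p \<ge> 2" shows "rk p \<le> 19/20"
proof -
  have t2a: "(20/19::real)^8 \<le> 2" by (simp add: power_divide)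
  have "(20/19::real) = ((20/19)^8) powr (1/8)" by (rule pow8_root[symmetric]) simp
  also have "\<dots> \<le> 2 powr (1/8)" by (rule powr_mono2[OF _ _ t2a]) simp_all
  also have "\<dots> \<le> real p powr (1/8)" using assms by (intro powr_mono2) auto
  finally have h: "real p powr (1/8) \<ge> 20/19" .
  have hp: "real p powr (1/8) > 0" using h by linarith
  have "rk p = 1 / real p powr (1/8)" unfolding rk_def by (rule inverse_eq_divide)
  also have "\<dots> \<le> 1 / (20/19)" using h hp by (intro divide_left_mono) auto
  finally show ?thesis by simp
qed

lemma rk_large: assumes "m > 0" "real p \<ge> m^8" shows "rk p \<le> 1/m"
proof -
  have "m = (m^8) powr (1/8)" using assms by (simp add: pow8_root)
  also have "\<dots> \<le> real p powr (1/8)" using assms by (intro powr_mono2) auto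
  finally have h: "m \<le> real p powr (1/8)" .
  have hp: "real p powr (1/8) > 0" using h assms by linarith
  have "rk p = 1 / real p powr (1/8)" unfolding rk_def by (rule inverse_eq_divide)
  also have "\<dots> \<le> 1 / m" using h assms hp by (intro divide_left_mono mult_pos_pos) auto
  finally show ?thesis .
qed

lemma key_num:
  fixes l t :: real
  assumes "l \<ge> 1" "t \<ge> 84 * ln (12 * exp 1 * l)" "ln (12 * exp 1 * l) \<ge> 3"
  shows "400 * 200^8 * l^9 * t^8 \<le> exp t"
proof -
  define a where "a = 12 * exp 1 * l"
  have t0: "t \<ge> 252" using assms unfolding a_def[symmetric] by linarith
  have la: "ln l \<le> ln a" unfolding a_def using assms e_bounds by (intro ln_mono) auto
  have "ln (t/32) \<le> t/32 - 1" by (rule ln_le_minus_one) (use t0 in auto)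
  moreover have "ln (t/32) = ln t - ln 32" using t0 by (simp add: ln_div)
  moreover have "ln (32::real) \<le> 4"
  proof -
    have "exp (4::real) = exp 1 ^ 4" by (simp flip: exp_of_nat_mult)
    also have "\<dots> \<ge> 2.7^4" using e_bounds by (intro power_mono) auto
    moreover have "(32::real) \<le> 2.7^4" by (simp add: power_divide)
    ultimately have "32 \<le> exp (4::real)" by linarith
    thus ?thesis by (metis ln_exp ln_le_cancel_iff exp_gt_zero zero_less_numeral)
  qed
  ultimately have lt: "ln t \<le> t/16" using t0 by linarith
  have c: "ln (400 * 200^8 :: real) \<le> 50"
  proof -
    have "exp (50::real) = exp 1 ^ 50" by (simp flip: exp_of_nat_mult)
    also have "\<dots> \<ge> 2.7^50" using e_bounds by (intro power_mono) auto
    moreover have "(400 * 200^8::real) \<le> 2.7^50" by (simp add: power_divide)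
    ultimately have "400 * 200^8 \<le> exp (50::real)" by linarith
    thus ?thesis by (metis ln_exp ln_le_cancel_iff exp_gt_zero zero_less_numeral zero_less_mult_iff zero_less_power)
  qed
  have "ln (400 * 200^8 * l^9 * t^8) = ln (400 * 200^8) + 9 * ln l + 8 * ln t"
    using assms t0 by (simp add: ln_mult ln_realpow)
  also have "\<dots> \<le> t" using c la lt t0 assms unfolding a_def[symmetric] by linarith
  finally have lnle: "ln (400 * 200^8 * l^9 * t^8) \<le> t" .
  have pos: "(0::real) < 400 * 200^8 * l^9 * t^8" using assms t0 by simp
  have "400 * 200^8 * l^9 * t^8 = exp (ln (400 * 200^8 * l^9 * t^8))" using pos by simp
  also have "\<dots> \<le> exp t" using lnle by simp
  finally show ?thesis .
qed

theorem lemma10: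
  fixes l x z :: real
  assumes "l \<ge> 1"
    and "x \<ge> exp (7 powr 28 * (12 * exp 1 * l) powr (28 * ln (192 * exp 1 * l)))"
    and "z \<ge> x powr (1 / (3 * l))"
  shows "real (card {n :: nat. 1 \<le> n \<and> real n \<le> z \<and>
                   real (gpf n) < ln x * ln (ln x)}) < z powr (1/4)"
proof -
  define a where "a = 12 * exp 1 * l"
  define E where "E = 7 powr 28 * a powr (28 * ln (192 * exp 1 * l))"
  define L where "L = ln x"
  define t where "t = ln L"
  define y where "y = L * t"
  define m where "m = 200 * l * t"
  define T where "T = m^8"
  have l0: "l > 0" using assms(1) by simp
  have a32: "a \<ge> 32"
  proof -
    have "12 * exp 1 * l \<ge> 12 * exp 1 * 1" using assms(1) by (intro mult_left_mono) auto
    thus ?thesis unfolding a_def using e_bounds by linarith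
  qed
  have e3: "exp (3::real) \<le> 27"
  proof -
    have "exp (3::real) = exp 1 ^ 3" by (simp flip: exp_of_nat_mult)
    also have "\<dots> \<le> 3^3" using e_bounds by (intro power_mono) auto
    finally show ?thesis by simp
  qed
  have la3: "ln a \<ge> 3"
  proof -
    have "ln (exp 3) \<le> ln a" using e3 a32 by (intro ln_mono) auto
    thus ?thesis by simp
  qed
  have lb3: "ln (192 * exp 1 * l) \<ge> 3"
  proof -
    have "192 * exp 1 * l \<ge> a" unfolding a_def using assms(1) e_bounds by simp
    hence "ln (192 * exp 1 * l) \<ge> ln a" using a32 by (intro ln_mono) auto
    thus ?thesis using la3 by linarith
  qed
  have xE: "exp E \<le> x" using assms(2) unfolding E_def a_def .
  have x0: "x > 0" using xE exp_gt_zero[of E] by linarith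
  have "ln (exp E) \<le> ln x" by (rule ln_mono[OF xE exp_gt_zero])
  hence LE: "L \<ge> E" unfolding L_def ln_exp .
  have p7: "0 < (7::real) powr 28" by (subst powr_gt_zero) simp
  have pa: "0 < a powr (28 * ln (192 * exp 1 * l))" by (subst powr_gt_zero) (use a32 in linarith)
  have E0: "E > 0" unfolding E_def using p7 pa by (rule mult_pos_pos)
  have L0: "L > 0" using LE E0 by linarith
  have lnE1: "ln E = ln (7 powr 28) + ln (a powr (28 * ln (192 * exp 1 * l)))"
    unfolding E_def by (rule ln_mult_pos[OF p7 pa])
  have lnE2: "ln (a powr (28 * ln (192 * exp 1 * l))) = 28 * ln (192 * exp 1 * l) * ln a"
    using a32 by (intro ln_powr; linarith)
  have lnE3: "ln (7 powr 28 :: real) \<ge> 0" by (rule ln_ge_zero, rule ge_one_powr_ge_zero) simp_all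
  have lnE: "ln E \<ge> 28 * ln (192 * exp 1 * l) * ln a" using lnE1 lnE2 lnE3 by linarith
  have "t \<ge> ln E" unfolding t_def using LE E0 by (intro ln_mono) auto
  moreover have "28 * ln (192 * exp 1 * l) * ln a \<ge> 84 * ln a"
    using lb3 la3 by (intro mult_right_mono) auto
  ultimately have t84: "t \<ge> 84 * ln a" using lnE by linarith
  have t0: "t \<ge> 252" using t84 la3 by linarith
  have key: "400 * 200^8 * l^9 * t^8 \<le> L"
    using key_num[OF assms(1) t84[unfolded a_def] la3[unfolded a_def]] L0 unfolding t_def by simp
  have "l * t \<ge> 1 * 252" using assms(1) t0 by (intro mult_mono) auto
  hence m2: "m \<ge> 2" unfolding m_def by linarith
  have "x powr (1 / (3 * l)) > 0" using x0 by simp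
  hence z0: "z > 0" using assms(3) by linarith
  have lnz: "ln z \<ge> L / (3 * l)"
  proof -
    have "ln z \<ge> ln (x powr (1 / (3 * l)))" using assms(3) x0 by (intro ln_mono) auto
    thus ?thesis using x0 by (simp add: ln_powr L_def)
  qed
  define P where "P = {p. prime p \<and> real p < y}"
  define N where "N = nat \<lfloor>z\<rfloor>"
  define S where "S = {n :: nat. 1 \<le> n \<and> real n \<le> z \<and> real (gpf n) < ln x * ln (ln x)}"
  have ypos: "y \<ge> 0" unfolding y_def using L0 t0 by simp
  have T0: "T \<ge> 0" unfolding T_def using m2 by simp
  have Pb: "finite P \<and> real (card P) \<le> y"
    by (rule card_le_real[OF ypos]) (auto simp: P_def Suc_le_eq prime_gt_0_nat)
  have P1b: "finite {p\<in>P. real p \<le> T} \<and> real (card {p\<in>P. real p \<le> T}) \<le> T"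
    by (rule card_le_real[OF T0]) (auto simp: P_def Suc_le_eq prime_gt_0_nat)
  have SA: "S \<subseteq> Asm P N"
  proof
    fix n assume "n \<in> S"
    hence n: "1 \<le> n" "real n \<le> z" "real (gpf n) < y" by (auto simp: S_def y_def L_def t_def)
    have "n \<le> N" unfolding N_def using n(2) by (rule nat_le_floor)
    moreover have "prime_factors n \<subseteq> P"
    proof
      fix q assume q: "q \<in> prime_factors n"
      hence "n \<noteq> 1" by auto
      hence "gpf n = Max (prime_factors n)" using n(1) by (simp add: gpf_def)
      hence "q \<le> gpf n" using q by simp
      thus "q \<in> P" using q n(3) by (auto simp: P_def in_prime_factors_iff)
    qed
    ultimately show "n \<in> Asm P N" using n by (simp add: Asm_def)
  qed
  have Sfin: "finite S" using SA Asm_finite by (rule finite_subset)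
  have c1: "real (card S) \<le> z powr (1/8) * (\<Sum>n\<in>Asm P N. rk n)"
  proof -
    have "real (card S) = (\<Sum>n\<in>S. 1)" by simp
    also have "\<dots> \<le> (\<Sum>n\<in>S. z powr (1/8) * rk n)"
    proof (intro sum_mono)
      fix n assume "n \<in> S"
      hence n: "1 \<le> n" "real n \<le> z" by (auto simp: S_def)
      have "real n powr (1/8) \<le> z powr (1/8)" using n by (intro powr_mono2) auto
      moreover have "real n powr (1/8) > 0" using n by simp
      ultimately show "1 \<le> z powr (1/8) * rk n" unfolding rk_def by (simp add: field_simps)
    qed
    also have "\<dots> \<le> (\<Sum>n\<in>Asm P N. z powr (1/8) * rk n)"
      by (intro sum_mono2 Asm_finite SA) (simp add: rk_nonneg)
    finally show ?thesis by (simp add: sum_distrib_left)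
  qed
  have c2: "(\<Sum>n\<in>Asm P N. rk n) \<le> (\<Prod>p\<in>P. 1 / (1 - rk p))"
    using Pb by (intro smooth_sum) (auto simp: P_def)
  define h where "h p = (if real p \<le> T then 4 else 2/m)" for p :: nat
  have c3: "(\<Prod>p\<in>P. 1 / (1 - rk p)) \<le> exp (\<Sum>p\<in>P. h p)"
  proof -
    have "(\<Prod>p\<in>P. 1 / (1 - rk p)) \<le> (\<Prod>p\<in>P. exp (h p))"
    proof (intro prod_mono conjI)
      fix p assume "p \<in> P"
      hence pp: "prime p" by (simp add: P_def)
      show "0 \<le> 1 / (1 - rk p)" using rk_prime[OF pp] by simp
      show "1 / (1 - rk p) \<le> exp (h p)"
      proof (cases "real p \<le> T")
        case True
        have "rk p \<le> 19/20" using prime_ge_2_nat[OF pp] by (rule rk_small)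
        hence "1 / (1 - rk p) \<le> 20" using rk_prime[OF pp] by (simp add: field_simps)
        also have "\<dots> \<le> exp 4" using exp4 by simp
        finally show ?thesis using True by (simp add: h_def)
      next
        case False
        have "rk p \<le> 1/m" using m2 False by (intro rk_large) (auto simp: T_def)
        hence "1 / (1 - rk p) \<le> 1 / (1 - 1/m)" using rk_prime[OF pp] m2
          by (intro divide_left_mono mult_pos_pos) auto
        also have "\<dots> \<le> exp (2 * (1/m))" using m2 by (intro inv_le_exp) auto
        finally show ?thesis using False by (simp add: h_def)
      qed
    qed
    thus ?thesis by (simp add: exp_sum Pb)
  qed
  have c4: "(\<Sum>p\<in>P. h p) \<le> 4 * T + 2 * y / m"
  proof -
    have "(\<Sum>p\<in>P. h p) \<le> (\<Sum>p\<in>P. (if real p \<le> T then 4 else 0) + 2/m)"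
      using m2 by (intro sum_mono) (auto simp: h_def)
    also have "\<dots> = (\<Sum>p\<in>P. (if real p \<le> T then 4 else 0)) + real (card P) * (2/m)"
      by (simp add: sum.distrib)
    also have "(\<Sum>p\<in>P. (if real p \<le> T then 4 else 0)) = (\<Sum>p\<in>{p\<in>P. real p \<le> T}. (4::real))"
      using Pb by (simp only: sum.inter_filter)
    also have "\<dots> = 4 * real (card {p\<in>P. real p \<le> T})" by simp
    finally have "(\<Sum>p\<in>P. h p) \<le> 4 * real (card {p\<in>P. real p \<le> T}) + real (card P) * (2/m)" .
    moreover have "real (card P) * (2/m) \<le> y * (2/m)" using Pb m2 by (intro mult_right_mono) auto
    moreover have "y * (2/m) = 2 * y / m" by simp
    ultimately show ?thesis using P1b by linarith
  qed
  have c5: "4 * T + 2 * y / m < ln z / 8"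
  proof -
    have "2 * y / m = L / (100 * l)" unfolding y_def m_def using t0 l0 by (simp add: field_simps)
    moreover have "4 * T \<le> L / (100 * l)"
    proof -
      have "4 * T * (100 * l) = 400 * 200^8 * l^9 * t^8" unfolding T_def m_def
        by (simp add: power_mult_distrib eval_nat_numeral algebra_simps)
      hence "4 * T * (100 * l) \<le> L" using key by linarith
      thus ?thesis using l0 by (simp add: pos_le_divide_eq)
    qed
    moreover have "L / (50 * l) < L / (24 * l)" using L0 l0 by (intro divide_strict_left_mono) auto
    moreover have "L / (24 * l) \<le> ln z / 8" using lnz by simp
    moreover have "L / (100 * l) + L / (100 * l) = L / (50 * l)" by simp
    ultimately show ?thesis by linarith
  qed
  have c6: "exp (ln z / 8) = z powr (1/8)" using z0 by (simp add: powr_def)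
  have "exp (\<Sum>p\<in>P. h p) < exp (ln z / 8)" using c4 c5 by (intro exp_less_mono) linarith
  hence "exp (\<Sum>p\<in>P. h p) < z powr (1/8)" using c6 by simp
  hence "(\<Prod>p\<in>P. 1 / (1 - rk p)) < z powr (1/8)" using c3 by linarith
  hence "z powr (1/8) * (\<Prod>p\<in>P. 1 / (1 - rk p)) < z powr (1/8) * z powr (1/8)"
    using z0 by simp
  also have "\<dots> = z powr (1/4)" by (simp flip: powr_add)
  finally have lt: "z powr (1/8) * (\<Prod>p\<in>P. 1 / (1 - rk p)) < z powr (1/4)" .
  have "z powr (1/8) * (\<Sum>n\<in>Asm P N. rk n) \<le> z powr (1/8) * (\<Prod>p\<in>P. 1 / (1 - rk p))"
    using c2 by (rule mult_left_mono) simp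
  hence "z powr (1/8) * (\<Sum>n\<in>Asm P N. rk n) < z powr (1/4)" using lt by linarith
  thus ?thesis using c1 unfolding S_def by linarith
qed

end
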